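(* Let $p$ and $s$ be distinct odd primes and $n$ a positive integer with $p\equiv1\pmod n$. Let $g$ be a primitive root modulo $p$, $\zeta$ a primitive $p$-th root of unity in $\overline{\mathbb{F}}_s$, and $G(p,n)=\langle a,b\mid a^p=1=b^{(p-1)/n},\ b^{-1}ab=a^{g^n}\rangle$. Let $\rho:\langle a\rangle\to\overline{\mathbb{F}}_s^*$ be given by $\rho(a)=\zeta$. Then the induced representation $\rho^{G(p,n)}$ is realizable over $\mathbb{F}_s$ if and only if $s$ is an $n$-th power in $\mathbb{F}_p$ (i.e. $s\equiv y^n\pmod p$ for some integer $y$).
   Context: A representation over $\overline{\mathbb{F}}_s$ is realizable over $\mathbb{F}_s$ if it is equivalent (over $\overline{\mathbb{F}}_s$) to a matrix representation with all entries in $\mathbb{F}_s$. Concretely, with $N=(p-1)/n$, $\rho^{G(p,n)}$ acts on a space with basis $e_0,\dots,e_{N-1}$ by $ae_i=\zeta^{g^{ni}}e_i$, $be_i=e_{i+1}$ (indices modulo $N$). *)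

theory Defs
  imports "HOL-Number_Theory.Number_Theory" "HOL-Algebra.Algebraic_Closure_Type"
    "Jordan_Normal_Form.Matrix" "Berlekamp_Zassenhaus.Finite_Field"
begin

text \<open>The prime field F_s is the type 's mod_ring (with CARD('s) = s prime);
its algebraic closure is 's mod_ring alg_closure, and F_s sits inside it as
the image of the canonical embedding to_ac.\<close>

definition prime_subfield :: "('s::prime_card mod_ring) alg_closure set" where
  "prime_subfield = range to_ac"

text \<open>Concrete matrices of the induced representation on basis e_0..e_(N-1),
N = (p-1)/n:  a e_i = zeta^(g^(n i)) e_i,  b e_i = e_(i+1 mod N).\<close>

definition ind_a :: "nat \<Rightarrow> nat \<Rightarrow> nat \<Rightarrow> 'k::field \<Rightarrow> 'k mat" where
  "ind_a p n g \<zeta> = (let N = (p - 1) div n in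
     mat N N (\<lambda>(i, j). if i = j then \<zeta> ^ (g ^ (n * j)) else 0))"

definition ind_b :: "nat \<Rightarrow> nat \<Rightarrow> 'k::field mat" where
  "ind_b p n = (let N = (p - 1) div n in
     mat N N (\<lambda>(i, j). if i = (j + 1) mod N then 1 else 0))"

text \<open>The induced representation, evaluated on the element a^i b^j of G(p,n)
(every element of G(p,n) has this form with i < p, j < N).\<close>

definition ind_rep :: "nat \<Rightarrow> nat \<Rightarrow> nat \<Rightarrow> 'k::field \<Rightarrow> nat \<times> nat \<Rightarrow> 'k mat" where
  "ind_rep p n g \<zeta> = (\<lambda>(i, j). (ind_a p n g \<zeta> ^\<^sub>m i) * (ind_b p n ^\<^sub>m j))"

definition G_elems :: "nat \<Rightarrow> nat \<Rightarrow> (nat \<times> nat) set" where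
  "G_elems p n = {..<p} \<times> {..<(p - 1) div n}"

definition realizable_over :: "'k::field set \<Rightarrow> nat \<Rightarrow> ('g \<Rightarrow> 'k mat) \<Rightarrow> 'g set \<Rightarrow> bool" where
  "realizable_over K d R Gs =
     (\<exists>P Q. P \<in> carrier_mat d d \<and> Q \<in> carrier_mat d d \<and> P * Q = 1\<^sub>m d \<and> Q * P = 1\<^sub>m d \<and>
        (\<forall>x\<in>Gs. \<forall>i<d. \<forall>j<d. (P * R x * Q) $$ (i, j) \<in> K))"

end

theory Submission
  imports Defs "Jordan_Normal_Form.Determinant"
begin

lemma if0_mult: "(if P then a else 0) * (b::'a::semiring_0) = (if P then a * b else 0)" by simp
lemma mult_if0: "(a::'a::semiring_0) * (if P then b else 0) = (if P then a * b else 0)" by simp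

lemma diag_pow:
  "(mat N N (\<lambda>(i,j). if i = j then d j else (0::'k::field))) ^\<^sub>m m
   = mat N N (\<lambda>(i,j). if i = j then d j ^ m else 0)"
proof (induction m)
  case 0 then show ?case by (auto intro!: eq_matI)
next
  case (Suc m)
  show ?case unfolding pow_mat.simps Suc
    by (rule eq_matI) (auto simp: scalar_prod_def if0_mult mult_if0 sum.delta sum.delta')
qed

lemma shift_pow:
  assumes "N > 0"
  shows "(mat N N (\<lambda>(i,j). if i = (j+1) mod N then 1 else (0::'k::field))) ^\<^sub>m m
   = mat N N (\<lambda>(i,j). if i = (j+m) mod N then 1 else 0)"
proof (induction m)
  case 0 then show ?case using assms by (auto intro!: eq_matI)
next
  case (Suc m)
  show ?case unfolding pow_mat.simps Suc
  proof (rule eq_matI)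
    fix i j assume ij: "i < dim_row (mat N N (\<lambda>(i, j). if i = (j + Suc m) mod N then 1 else (0::'k)))"
        "j < dim_col (mat N N (\<lambda>(i, j). if i = (j + Suc m) mod N then 1 else (0::'k)))"
    have "(\<Sum>c = 0..<N. (if i = (c + m) mod N then 1 else 0) * (if c = (j + 1) mod N then 1 else (0::'k)))
        = (\<Sum>c = 0..<N. if c = (j + 1) mod N then (if i = (c + m) mod N then 1 else 0) else 0)"
      by (rule sum.cong) auto
    also have "\<dots> = (if i = ((j+1) mod N + m) mod N then 1 else 0)"
      using assms by (simp add: sum.delta)
    also have "((j+1) mod N + m) mod N = (j + Suc m) mod N" by (simp add: mod_add_left_eq)
    finally show "(mat N N (\<lambda>(i, j). if i = (j + m) mod N then 1 else 0) * mat N N (\<lambda>(i, j). if i = (j + 1) mod N then 1 else 0)) $$ (i, j) =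
         mat N N (\<lambda>(i, j). if i = (j + Suc m) mod N then 1 else (0::'k)) $$ (i, j)"
      using ij by (simp add: scalar_prod_def)
  qed auto
qed

lemma ind_rep_explicit:
  fixes \<zeta> :: "'k::field"
  assumes "(p - 1) div n > 0"
  shows "ind_rep p n g \<zeta> (i, j) = mat ((p-1) div n) ((p-1) div n)
     (\<lambda>(a,b). if a = (b + j) mod ((p-1) div n) then (\<zeta> ^ (g ^ (n * a))) ^ i else 0)"
proof -
  define N where "N = (p-1) div n"
  have A: "ind_a p n g \<zeta> = mat N N (\<lambda>(i,j). if i = j then \<zeta> ^ (g ^ (n * j)) else 0)"
    unfolding ind_a_def N_def Let_def by simp
  have B: "ind_b p n = mat N N (\<lambda>(i,j). if i = (j+1) mod N then 1 else (0::'k))"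
    unfolding ind_b_def N_def Let_def by simp
  show ?thesis
    unfolding ind_rep_def split N_def[symmetric] A B diag_pow shift_pow[OF assms[folded N_def]]
    by (rule eq_matI) (auto simp: scalar_prod_def if0_mult mult_if0 sum.delta sum.delta')
qed



lemma zeta_mod:
  fixes \<zeta> :: "'k::field"
  assumes "\<zeta> ^ p = 1"
  shows "\<zeta> ^ x = \<zeta> ^ (x mod p)"
proof -
  have "\<zeta> ^ x = \<zeta> ^ (p * (x div p) + x mod p)" by simp
  also have "\<dots> = (\<zeta> ^ p) ^ (x div p) * \<zeta> ^ (x mod p)" by (simp only: power_add power_mult)
  finally show ?thesis using assms by simp
qed

lemma zeta_eq_iff:
  fixes \<zeta> :: "'k::field"
  assumes "\<zeta> ^ p = 1" "\<forall>k. 0 < k \<and> k < p \<longrightarrow> \<zeta> ^ k \<noteq> 1" "p > 0"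
  shows "\<zeta> ^ x = \<zeta> ^ y \<longleftrightarrow> x mod p = y mod p"
proof
  assume "x mod p = y mod p" then show "\<zeta> ^ x = \<zeta> ^ y"
    using zeta_mod[OF assms(1), of x] zeta_mod[OF assms(1), of y] by simp
next
  have nz: "\<zeta> \<noteq> 0" using assms(1,3) by (metis power_0_left zero_neq_one not_gr0)
  have *: "u < v \<Longrightarrow> v < p \<Longrightarrow> \<zeta> ^ u \<noteq> \<zeta> ^ v" for u v
  proof
    assume uv: "u < v" "v < p" "\<zeta> ^ u = \<zeta> ^ v"
    have "\<zeta> ^ v = \<zeta> ^ u * \<zeta> ^ (v - u)" using uv(1) by (metis le_add_diff_inverse less_imp_le power_add)
    then have "\<zeta> ^ (v - u) = 1" using uv nz by simp
    then show False using assms(2) uv by auto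
  qed
  assume "\<zeta> ^ x = \<zeta> ^ y"
  then have e: "\<zeta> ^ (x mod p) = \<zeta> ^ (y mod p)"
    using zeta_mod[OF assms(1), of x] zeta_mod[OF assms(1), of y] by simp
  show "x mod p = y mod p"
  proof (rule ccontr)
    assume ne: "x mod p \<noteq> y mod p"
    have "x mod p < p" "y mod p < p" using assms(3) by auto
    then show False using *[of "x mod p" "y mod p"] *[of "y mod p" "x mod p"] ne e
      by (cases "x mod p < y mod p") auto
  qed
qed

lemma zeta_geom:
  fixes \<zeta> :: "'k::field"
  assumes "\<zeta> ^ p = 1" "\<forall>k. 0 < k \<and> k < p \<longrightarrow> \<zeta> ^ k \<noteq> 1" "p > 0"
  shows "(\<Sum>i<p. (\<zeta> ^ e) ^ i) = (if p dvd e then of_nat p else 0)"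
proof (cases "p dvd e")
  case True
  then have "\<zeta> ^ e = 1" using zeta_mod[OF assms(1), of e] by simp
  then show ?thesis using True by simp
next
  case False
  then have "\<zeta> ^ e \<noteq> \<zeta> ^ 0" using zeta_eq_iff[OF assms, of e 0] by (simp add: dvd_eq_mod_eq_0)
  moreover have "(\<zeta> ^ e) ^ p = 1" using assms(1) by (metis mult.commute power_mult power_one)
  ultimately show ?thesis using False by (simp add: sum_gp_strict)
qed

lemma CHAR_K: "CHAR('s::prime_card mod_ring alg_closure) = CARD('s)"
  by simp

lemma frob_add: "((x::'s::prime_card mod_ring alg_closure) + y) ^ CARD('s) = x ^ CARD('s) + y ^ CARD('s)"
  by (rule freshmans_dream) (auto simp: prime_card)

lemma frob_sum: "(sum f A :: 's::prime_card mod_ring alg_closure) ^ CARD('s) = (\<Sum>i\<in>A. f i ^ CARD('s))"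
  by (rule freshmans_dream_sum) (auto simp: prime_card)

lemma ps_frob: "x \<in> prime_subfield \<Longrightarrow> (x::'s::prime_card mod_ring alg_closure) ^ CARD('s) = x"
  unfolding prime_subfield_def
  using finite_field_power_card_eq_same[where 'a="'s mod_ring"] by (auto simp flip: to_ac_power)

lemma frob_ps:
  assumes "(x::'s::prime_card mod_ring alg_closure) ^ CARD('s) = x"
  shows "x \<in> prime_subfield"
proof (rule ccontr)
  assume nx: "x \<notin> prime_subfield"
  define f :: "'s mod_ring alg_closure poly" where "f = monom 1 CARD('s) + - monom 1 1"
  have c2: "CARD('s) \<ge> 2" using prime_card prime_ge_2_nat by blast
  have df: "degree f = CARD('s)" unfolding f_def using c2
    by (subst degree_add_eq_left) (simp_all add: degree_monom_eq)
  then have f0: "f \<noteq> 0" using c2 by auto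
  have sub: "insert x prime_subfield \<subseteq> {y. poly f y = 0}"
    using assms ps_frob unfolding f_def by (auto simp: poly_monom)
  have "CARD('s) + 1 = card (insert x prime_subfield)"
    using nx unfolding prime_subfield_def
    by (simp add: card_image inj_to_ac)
  also have "\<dots> \<le> card {y. poly f y = 0}"
    by (rule card_mono[OF poly_roots_finite[OF f0] sub])
  also have "\<dots> \<le> CARD('s)" using card_poly_roots_bound[OF f0] df by simp
  finally show False by simp
qed



locale setup_nt =
  fixes p s n g :: nat
  assumes p: "Factorial_Ring.prime p" and s: "Factorial_Ring.prime s" and ps: "p \<noteq> s"
    and n: "n > 0" and pn: "[p = 1] (mod n)" and g: "ord p g = p - 1"
begin

definition "N = (p - 1) div n"

lemma p2: "p \<ge> 2" using p prime_ge_2_nat by blast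

lemma nN: "n * N = p - 1"
proof -
  have "n dvd p - 1" using pn p2 by (simp add: cong_altdef_nat)
  then show ?thesis unfolding N_def by simp
qed

lemma N_pos: "N > 0" using nN p2 by (cases N) auto

lemma cop: "coprime p g"
  using g p2 ord_eq_0[of p g] by auto

lemma g_fermat: "[g ^ (p - 1) = 1] (mod p)" using ord[of g p] g by simp

lemma gpow_mod: "[g ^ (n * x) = g ^ (n * (x mod N))] (mod p)"
proof -
  have "n * x = n * (x mod N) + (n * N) * (x div N)"
    by (metis add.commute div_mult_mod_eq distrib_left mult.assoc mult.commute)
  then have "g ^ (n * x) = g ^ (n * (x mod N)) * (g ^ (p - 1)) ^ (x div N)"
    by (simp add: nN power_add power_mult)
  also have "[\<dots> = g ^ (n * (x mod N)) * 1 ^ (x div N)] (mod p)"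
    by (intro cong_mult cong_pow g_fermat cong_refl)
  finally show ?thesis by simp
qed

lemma gpow_inj:
  assumes "a < N" "b < N" "g ^ (n * a) mod p = g ^ (n * b) mod p"
  shows "a = b"
proof -
  have "inj_on (\<lambda>k. g ^ k mod p) {..<ord p g}" by (rule inj_power_mod[OF cop])
  moreover have "n * a < n * N" "n * b < n * N" using assms n by auto
  then have "n * a < p - 1" "n * b < p - 1" using nN by auto
  ultimately have "n * a = n * b"
    using assms(3) g inj_onD[of "\<lambda>k. g ^ k mod p" "{..<ord p g}" "n*a" "n*b"] by simp
  then show ?thesis using n by simp
qed

lemma gpow_ne1:
  assumes "k < N" "k \<noteq> 0"
  shows "\<not> p dvd (g ^ (n * k) + (p - 1))"
proof
  assume "p dvd (g ^ (n * k) + (p - 1))"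
  then have "[g ^ (n * k) + (p - 1) = 1 + (p - 1)] (mod p)"
    using p2 unfolding cong_def by simp
  then have "[g ^ (n * k) = 1] (mod p)" by (simp only: cong_add_rcancel_nat)
  then have "p - 1 dvd n * k" using ord_divides[of g "n*k" p] g by simp
  moreover have "n * k < n * N" using assms n by auto
  moreover have "0 < n * k" "n * k < p - 1" using assms nN n calculation by auto
  ultimately show False by (simp add: nat_dvd_not_less)
qed

lemma fwd_final:
  assumes "[g ^ (n * k) * s = 1] (mod p)"
  shows "\<exists>y::int. [int s = y ^ n] (mod int p)"
proof -
  have "[s = s * (g ^ (p - 1)) ^ (n * k)] (mod p)"
    using cong_mult[OF cong_refl[of s] cong_pow[OF g_fermat, of "n*k"]] by (simp add: cong_sym)
  also have "s * (g ^ (p - 1)) ^ (n * k) = (g ^ (n * k) * s) * g ^ (n * k * (p - 2))"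
  proof -
    have "(p - 1) * (n * k) = n * k + n * k * (p - 2)" using p2
      by (simp add: algebra_simps diff_mult_distrib2)
    then have "(g ^ (p - 1)) ^ (n * k) = g ^ (n * k) * g ^ (n * k * (p - 2))"
      by (simp only: power_mult[symmetric] power_add[symmetric])
    then show ?thesis by (simp add: algebra_simps)
  qed
  also have "[\<dots> = 1 * g ^ (n * k * (p - 2))] (mod p)"
    by (intro cong_mult assms cong_refl)
  finally have c: "[s = 1 * g ^ (n * k * (p - 2))] (mod p)" .
  have "g ^ (n * k * (p - 2)) = (g ^ (k * (p - 2))) ^ n"
    by (simp only: power_mult[symmetric] mult_ac)
  with c have "[s = (g ^ (k * (p - 2))) ^ n] (mod p)"
    by simp
  then have "[int s = int (g ^ (k * (p - 2))) ^ n] (mod int p)"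
    by (metis cong_int_iff of_nat_power)
  then show ?thesis by blast
qed

lemma bwd_start:
  assumes "[int s = y ^ n] (mod int p)"
  shows "\<exists>m<N. [s = g ^ (n * m)] (mod p)"
proof -
  define y' where "y' = nat (y mod int p)"
  have "int y' = y mod int p" unfolding y'_def using p2 by simp
  then have yy: "[int y' = y] (mod int p)" by (simp add: cong_def)
  have "[int s = int y' ^ n] (mod int p)"
    by (rule cong_trans[OF assms cong_pow[OF cong_sym[OF yy]]])
  then have "[int s = int (y' ^ n)] (mod int p)" by simp
  then have sy: "[s = y' ^ n] (mod p)" by (simp only: cong_int_iff)
  have "coprime p y'"
  proof (rule ccontr)
    assume "\<not> coprime p y'"
    then have "p dvd y'" using p prime_imp_coprime by blast
    then have "p dvd y' ^ n" using n dvd_power[of n y'] dvd_trans by blast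
    then have "p dvd s" using cong_dvd_iff[OF sy] by blast
    then show False using p s ps primes_dvd_imp_eq by blast
  qed
  have pr: "residue_primroot p g"
    using cop g p2 p by (simp add: residue_primroot_def totient_prime)
  have "y' mod p \<noteq> 0"
  proof
    assume "y' mod p = 0"
    then have "p dvd y'" by auto
    then have "p = 1" using \<open>coprime p y'\<close> coprime_common_divisor_nat[of p y' p] by simp
    then show False using p2 by simp
  qed
  moreover have "coprime (y' mod p) p" using \<open>coprime p y'\<close> p2
    by (simp add: coprime_commute coprime_mod_left_iff)
  moreover have "y' mod p < p" using p2 by simp
  ultimately have "y' mod p \<in> totatives p" by (auto simp: totatives_def)
  then have "y' mod p \<in> (\<lambda>i. g ^ i mod p) ` {..<totient p}"
    using residue_primroot_is_generator[OF _ pr] p2 unfolding bij_betw_def by simp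
  then obtain t where "y' mod p = g ^ t mod p" by (rule imageE)
  then have t: "g ^ t mod p = y' mod p" by simp
  then have "[g ^ t = y'] (mod p)" by (simp add: cong_def)
  then have "[(g ^ t) ^ n = y' ^ n] (mod p)" by (rule cong_pow)
  then have "[s = (g ^ t) ^ n] (mod p)" by (rule cong_trans[OF sy cong_sym])
  then have "[s = g ^ (n * t)] (mod p)" by (simp only: power_mult[symmetric] mult.commute)
  also have "[g ^ (n * t) = g ^ (n * (t mod N))] (mod p)" by (rule gpow_mod)
  finally show ?thesis using N_pos by (intro exI[of _ "t mod N"]) auto
qed

end


definition PM :: "nat \<Rightarrow> (nat \<Rightarrow> nat) \<Rightarrow> 'k::field mat" where
  "PM N sg = mat N N (\<lambda>(a,b). if b = sg a then 1 else 0)"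
definition PMI :: "nat \<Rightarrow> (nat \<Rightarrow> nat) \<Rightarrow> 'k::field mat" where
  "PMI N sg = mat N N (\<lambda>(a,b). if a = sg b then 1 else 0)"

lemma PM_carrier[simp]: "PM N sg \<in> carrier_mat N N" "PMI N sg \<in> carrier_mat N N"
  unfolding PM_def PMI_def by auto

lemma perm_left:
  assumes "Xm \<in> carrier_mat N c" "\<And>a. a < N \<Longrightarrow> sg a < N"
  shows "PM N sg * Xm = mat N c (\<lambda>(a,b). Xm $$ (sg a, b))"
proof (rule eq_matI)
  fix a b assume ab: "a < dim_row (mat N c (\<lambda>(a,b). Xm $$ (sg a, b)))" "b < dim_col (mat N c (\<lambda>(a,b). Xm $$ (sg a, b)))"
  then have "a < N" "b < c" by auto
  have "(PM N sg * Xm) $$ (a, b) = (\<Sum>k = 0..<N. (if k = sg a then 1 else 0) * Xm $$ (k, b))"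
    using assms(1) \<open>a < N\<close> \<open>b < c\<close> by (simp add: PM_def scalar_prod_def)
  also have "\<dots> = (\<Sum>k = 0..<N. if k = sg a then Xm $$ (k, b) else 0)"
    by (rule sum.cong) auto
  also have "\<dots> = Xm $$ (sg a, b)" using assms(2)[OF \<open>a < N\<close>] by (simp add: sum.delta)
  finally show "(PM N sg * Xm) $$ (a, b) = mat N c (\<lambda>(a,b). Xm $$ (sg a, b)) $$ (a, b)"
    using \<open>a < N\<close> \<open>b < c\<close> by simp
qed (use assms in \<open>auto simp: PM_def\<close>)

lemma perm_right:
  assumes "Xm \<in> carrier_mat r N" "\<And>a. a < N \<Longrightarrow> sg a < N"
  shows "Xm * PMI N sg = mat r N (\<lambda>(a,b). Xm $$ (a, sg b))"
proof (rule eq_matI)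
  fix a b assume ab: "a < dim_row (mat r N (\<lambda>(a,b). Xm $$ (a, sg b)))" "b < dim_col (mat r N (\<lambda>(a,b). Xm $$ (a, sg b)))"
  then have "a < r" "b < N" by auto
  have "(Xm * PMI N sg) $$ (a, b) = (\<Sum>k = 0..<N. Xm $$ (a, k) * (if k = sg b then 1 else 0))"
    using assms(1) \<open>a < r\<close> \<open>b < N\<close> by (simp add: PMI_def scalar_prod_def)
  also have "\<dots> = (\<Sum>k = 0..<N. if k = sg b then Xm $$ (a, k) else 0)"
    by (rule sum.cong) auto
  also have "\<dots> = Xm $$ (a, sg b)" using assms(2)[OF \<open>b < N\<close>] by (simp add: sum.delta)
  finally show "(Xm * PMI N sg) $$ (a, b) = mat r N (\<lambda>(a,b). Xm $$ (a, sg b)) $$ (a, b)"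
    using \<open>a < r\<close> \<open>b < N\<close> by simp
qed (use assms in \<open>auto simp: PMI_def\<close>)

lemma perm_inv:
  assumes "\<And>a. a < N \<Longrightarrow> sg a < N" "\<And>a. a < N \<Longrightarrow> tu a < N"
    "\<And>a. a < N \<Longrightarrow> sg (tu a) = a" "\<And>a. a < N \<Longrightarrow> tu (sg a) = a"
  shows "PM N sg * PMI N sg = (1\<^sub>m N :: 'k::field mat)"
    "PMI N sg = (PM N tu :: 'k mat)"
    "PMI N sg * PM N sg = (1\<^sub>m N :: 'k mat)"
proof -
  have inj: "x = y" if "x < N" "y < N" "sg x = sg y" for x y
    using assms(4)[OF that(1)] assms(4)[OF that(2)] that(3) by metis
  have injt: "x = y" if "x < N" "y < N" "tu x = tu y" for x y
    using assms(3)[OF that(1)] assms(3)[OF that(2)] that(3) by metis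
  have "PM N sg * (PMI N sg :: 'k mat) = mat N N (\<lambda>(a,b). PMI N sg $$ (sg a, b))"
    by (rule perm_left) (use assms in auto)
  also have "\<dots> = 1\<^sub>m N"
    by (rule eq_matI) (auto simp: PMI_def assms(1) dest: inj)
  finally show 1: "PM N sg * PMI N sg = (1\<^sub>m N :: 'k::field mat)" .
  have e1: "(i = sg j) = (j = tu i)" if "i < N" "j < N" for i j
    using assms(3)[OF that(1)] assms(4)[OF that(2)] by metis
  have e2: "(i = tu j) = (j = sg i)" if "i < N" "j < N" for i j
    using assms(3)[OF that(2)] assms(4)[OF that(1)] by metis
  show 2: "PMI N sg = (PM N tu :: 'k mat)"
    unfolding PMI_def PM_def
  proof (rule eq_matI)
    fix i j assume "i < dim_row (mat N N (\<lambda>(a, b). if b = tu a then 1 else (0::'k)))"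
      "j < dim_col (mat N N (\<lambda>(a, b). if b = tu a then 1 else (0::'k)))"
    then have ij: "i < N" "j < N" by auto
    show "mat N N (\<lambda>(a, b). if a = sg b then 1 else (0::'k)) $$ (i, j) =
         mat N N (\<lambda>(a, b). if b = tu a then 1 else 0) $$ (i, j)"
      using ij e1[OF ij] by simp
  qed auto
  have 3: "PMI N tu = (PM N sg :: 'k mat)"
    unfolding PMI_def PM_def
  proof (rule eq_matI)
    fix i j assume "i < dim_row (mat N N (\<lambda>(a, b). if b = sg a then 1 else (0::'k)))"
      "j < dim_col (mat N N (\<lambda>(a, b). if b = sg a then 1 else (0::'k)))"
    then have ij: "i < N" "j < N" by auto
    show "mat N N (\<lambda>(a, b). if a = tu b then 1 else (0::'k)) $$ (i, j) =
         mat N N (\<lambda>(a, b). if b = sg a then 1 else 0) $$ (i, j)"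
      using ij e2[OF ij] by simp
  qed auto
  have "PM N tu * (PMI N tu :: 'k mat) = mat N N (\<lambda>(a,b). PMI N tu $$ (tu a, b))"
    by (rule perm_left) (use assms in auto)
  also have "\<dots> = 1\<^sub>m N"
    by (rule eq_matI) (auto simp: PMI_def assms(2) dest: injt)
  finally show "PMI N sg * PM N sg = (1\<^sub>m N :: 'k mat)" using 2 3 by simp
qed


lemma tr_comm:
  fixes A B :: "'k::comm_ring_1 mat"
  assumes "A \<in> carrier_mat N N" "B \<in> carrier_mat N N"
  shows "(\<Sum>a<N. (A * B) $$ (a, a)) = (\<Sum>a<N. (B * A) $$ (a, a))"
proof -
  have "(\<Sum>a<N. (A * B) $$ (a, a)) = (\<Sum>a<N. \<Sum>b<N. A $$ (a, b) * B $$ (b, a))"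
    using assms by (intro sum.cong) (auto simp: scalar_prod_def atLeast0LessThan)
  also have "\<dots> = (\<Sum>b<N. \<Sum>a<N. B $$ (b, a) * A $$ (a, b))"
    by (subst sum.swap) (intro sum.cong refl mult.commute)
  also have "\<dots> = (\<Sum>a<N. (B * A) $$ (a, a))"
    using assms by (intro sum.cong) (auto simp: scalar_prod_def atLeast0LessThan)
  finally show ?thesis .
qed

lemma frob_hom: "semiring_hom (\<lambda>x::'s::prime_card mod_ring alg_closure. x ^ CARD('s))"
proof
  have "CARD('s) > 0" by simp
  then show "(0::'s mod_ring alg_closure) ^ CARD('s) = 0" by simp
  show "(1::'s mod_ring alg_closure) ^ CARD('s) = 1" by simp
  show "(x * y) ^ CARD('s) = x ^ CARD('s) * y ^ CARD('s)" for x y :: "'s mod_ring alg_closure"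
    by (simp add: power_mult_distrib)
  show "(x + y) ^ CARD('s) = x ^ CARD('s) + y ^ CARD('s)" for x y :: "'s mod_ring alg_closure"
    by (rule freshmans_dream) (auto simp: prime_card)
qed

lemma frob_mat_mult:
  assumes "A \<in> carrier_mat nr n" "B \<in> carrier_mat n nc"
  shows "map_mat (\<lambda>x::'s::prime_card mod_ring alg_closure. x ^ CARD('s)) (A * B)
      = map_mat (\<lambda>x. x ^ CARD('s)) A * map_mat (\<lambda>x. x ^ CARD('s)) B"
  by (rule semiring_hom.mat_hom_mult[OF frob_hom assms])

lemma frob_mat_one:
  "map_mat (\<lambda>x::'s::prime_card mod_ring alg_closure. x ^ CARD('s)) (1\<^sub>m N) = 1\<^sub>m N"
  by (rule semiring_hom.mat_hom_one[OF frob_hom])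



locale mainctx = setup_nt p s n g for p s n g +
  fixes \<zeta> :: "'s::prime_card mod_ring alg_closure"
  assumes sc: "s = CARD('s)" and z1: "\<zeta> ^ p = 1" and z2: "\<forall>k. 0 < k \<and> k < p \<longrightarrow> \<zeta> ^ k \<noteq> 1"
begin

definition z where "z k = \<zeta> ^ (g ^ (n * k))"

lemma p0: "p > 0" using p2 by simp

lemma R_eq: "ind_rep p n g \<zeta> (i, j) = mat N N (\<lambda>(a,b). if a = (b + j) mod N then z a ^ i else 0)"
  using ind_rep_explicit[of p n g \<zeta> i j] N_pos unfolding N_def z_def by simp

lemma R_carrier: "ind_rep p n g \<zeta> x \<in> carrier_mat N N"
  by (cases x) (simp add: R_eq)

lemma z_inj: assumes "a < N" "b < N" "z a = z b" shows "a = b"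
proof -
  have "g ^ (n * a) mod p = g ^ (n * b) mod p"
    using assms(3) zeta_eq_iff[OF z1 z2 p0] unfolding z_def by blast
  then show ?thesis using gpow_inj assms(1,2) by blast
qed

lemma Kp: "(of_nat p :: 's mod_ring alg_closure) \<noteq> 0"
proof
  assume "(of_nat p :: 's mod_ring alg_closure) = 0"
  then have "CHAR('s mod_ring alg_closure) dvd p" by (simp only: of_nat_eq_0_iff_char_dvd)
  then have "s dvd p" using sc by simp
  then show False using p s ps primes_dvd_imp_eq by metis
qed

lemma orth:
  "(\<Sum>i<p. (\<zeta> ^ (p - 1)) ^ i * (\<Sum>a<N. (\<zeta> ^ e a) ^ i))
   = (\<Sum>a<N. if p dvd (e a + (p - 1)) then of_nat p else 0)"
proof -
  have h: "(\<zeta> ^ (p - 1)) ^ i * (\<zeta> ^ x) ^ i = (\<zeta> ^ (x + (p - 1))) ^ i" for i x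
  proof -
    have "(\<zeta> ^ (x + (p - 1))) ^ i = (\<zeta> ^ x) ^ i * (\<zeta> ^ (p - 1)) ^ i"
      by (simp only: power_add power_mult_distrib)
    then show ?thesis by (simp only: mult.commute)
  qed
  have "(\<Sum>i<p. (\<zeta> ^ (p - 1)) ^ i * (\<Sum>a<N. (\<zeta> ^ e a) ^ i))
      = (\<Sum>i<p. \<Sum>a<N. (\<zeta> ^ (e a + (p - 1))) ^ i)"
    by (intro sum.cong refl) (simp only: sum_distrib_left h)
  also have "\<dots> = (\<Sum>a<N. \<Sum>i<p. (\<zeta> ^ (e a + (p - 1))) ^ i)"
    by (rule sum.swap)
  also have "\<dots> = (\<Sum>a<N. if p dvd (e a + (p - 1)) then of_nat p else 0)"
    by (intro sum.cong refl zeta_geom[OF z1 z2 p0])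
  finally show ?thesis .
qed

lemma fwd:
  assumes "realizable_over prime_subfield N (ind_rep p n g \<zeta>) (G_elems p n)"
  shows "\<exists>y::int. [int s = y ^ n] (mod int p)"
proof -
  obtain P Q where PQ: "P \<in> carrier_mat N N" "Q \<in> carrier_mat N N" "P * Q = 1\<^sub>m N" "Q * P = 1\<^sub>m N"
    and ent: "\<forall>x\<in>G_elems p n. \<forall>i<N. \<forall>j<N. (P * ind_rep p n g \<zeta> x * Q) $$ (i, j) \<in> prime_subfield"
    using assms unfolding realizable_over_def by blast
  have key: "(\<Sum>a<N. (\<zeta> ^ (g ^ (n * a) * s)) ^ i) = (\<Sum>a<N. (\<zeta> ^ (g ^ (n * a))) ^ i)" if "i < p" for i
  proof -
    let ?R = "ind_rep p n g \<zeta> (i, 0)"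
    have Rc: "?R \<in> carrier_mat N N" by (rule R_carrier)
    have G: "(i, 0) \<in> G_elems p n" using that N_pos by (simp add: G_elems_def N_def)
    have "(\<Sum>a<N. (P * ?R * Q) $$ (a, a)) = (\<Sum>a<N. (Q * (P * ?R)) $$ (a, a))"
      by (rule tr_comm) (use PQ Rc in auto)
    also have "Q * (P * ?R) = ?R"
      using PQ Rc by (simp flip: assoc_mult_mat[of Q N N P N ?R N])
    also have "(\<Sum>a<N. ?R $$ (a, a)) = (\<Sum>a<N. z a ^ i)"
      by (intro sum.cong refl) (simp add: R_eq)
    finally have tr: "(\<Sum>a<N. (P * ?R * Q) $$ (a, a)) = (\<Sum>a<N. z a ^ i)" .
    have "(\<Sum>a<N. (P * ?R * Q) $$ (a, a)) ^ CARD('s) = (\<Sum>a<N. ((P * ?R * Q) $$ (a, a)) ^ CARD('s))"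
      by (rule frob_sum)
    also have "\<dots> = (\<Sum>a<N. (P * ?R * Q) $$ (a, a))"
      using ent G by (intro sum.cong refl ps_frob) auto
    finally have "(\<Sum>a<N. z a ^ i) ^ CARD('s) = (\<Sum>a<N. z a ^ i)" using tr by simp
    then have "(\<Sum>a<N. (z a ^ i) ^ CARD('s)) = (\<Sum>a<N. z a ^ i)" by (simp add: frob_sum)
    then show ?thesis unfolding z_def sc
      by (simp add: power_mult[symmetric] mult.commute mult.left_commute)
  qed
  define u where "u a = g ^ (n * a)" for a
  have "(\<Sum>a<N. if p dvd (u a * s + (p - 1)) then of_nat p else 0)
      = (\<Sum>i<p. (\<zeta> ^ (p - 1)) ^ i * (\<Sum>a<N. (\<zeta> ^ (u a * s)) ^ i))"
    by (rule orth[symmetric])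
  also have "\<dots> = (\<Sum>i<p. (\<zeta> ^ (p - 1)) ^ i * (\<Sum>a<N. (\<zeta> ^ u a) ^ i))"
    using key unfolding u_def by (intro sum.cong refl) auto
  also have "\<dots> = (\<Sum>a<N. if p dvd (u a + (p - 1)) then of_nat p else 0)"
    by (rule orth)
  also have "\<dots> = (\<Sum>a<N. if a = 0 then of_nat p else 0)"
  proof (intro sum.cong refl)
    fix a assume "a \<in> {..<N}"
    show "(if p dvd (u a + (p - 1)) then of_nat p else 0) = (if a = 0 then (of_nat p :: 's mod_ring alg_closure) else 0)"
    proof (cases "a = 0")
      case True then show ?thesis using p2 by (simp add: u_def)
    next
      case False then show ?thesis using gpow_ne1[of a] \<open>a \<in> {..<N}\<close> by (simp add: u_def)
    qed
  qed
  also have "\<dots> = of_nat p" using N_pos by (simp add: sum.delta)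
  finally have "(\<Sum>a<N. if p dvd (u a * s + (p - 1)) then of_nat p else 0) \<noteq> (0 :: 's mod_ring alg_closure)"
    using Kp by simp
  then obtain a where "p dvd (u a * s + (p - 1))"
    by (metis (mono_tags, lifting) sum.neutral)
  then have "[u a * s + (p - 1) = 1 + (p - 1)] (mod p)"
    using p2 unfolding cong_def by simp
  then have "[g ^ (n * a) * s = 1] (mod p)" unfolding u_def by (simp only: cong_add_rcancel_nat)
  then show ?thesis by (rule fwd_final)
qed

lemma multN: "A \<in> carrier_mat N N \<Longrightarrow> B \<in> carrier_mat N N \<Longrightarrow> A * B \<in> carrier_mat N N"
  by simp
lemma assocN: "A \<in> carrier_mat N N \<Longrightarrow> B \<in> carrier_mat N N \<Longrightarrow> C \<in> carrier_mat N N
   \<Longrightarrow> A * B * C = A * (B * C)"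
  by (rule assoc_mult_mat)

lemma Vdm_inv:
  defines "Q \<equiv> mat N N (\<lambda>(k, t). z k ^ t)"
  shows "\<exists>P. P \<in> carrier_mat N N \<and> P * Q = 1\<^sub>m N \<and> Q * P = 1\<^sub>m N"
proof -
  have Qc: "Q \<in> carrier_mat N N" unfolding Q_def by simp
  have "det Q \<noteq> 0"
  proof
    assume "det Q = 0"
    then obtain v where v: "v \<in> carrier_vec N" "v \<noteq> 0\<^sub>v N" "Q *\<^sub>v v = 0\<^sub>v N"
      using det_0_iff_vec_prod_zero_field[OF Qc] by blast
    obtain t0 where t0: "t0 < N" "v $ t0 \<noteq> 0"
    proof (rule ccontr)
      assume "\<not> ?thesis"
      then have "\<forall>t<N. v $ t = 0" using that by blast
      then have "v = 0\<^sub>v N" using v(1) by (intro eq_vecI) auto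
      then show False using v(2) by simp
    qed
    define f :: "'s mod_ring alg_closure poly" where "f = (\<Sum>t<N. Polynomial.monom (v $ t) t)"
    have pf: "poly f x = (\<Sum>t<N. v $ t * x ^ t)" for x
      by (simp add: f_def poly_sum poly_monom)
    have roots: "poly f (z k) = 0" if "k < N" for k
    proof -
      have "(Q *\<^sub>v v) $ k = 0" using v(3) that by simp
      moreover have "(Q *\<^sub>v v) $ k = (\<Sum>t<N. z k ^ t * v $ t)"
        using that v(1) by (simp add: Q_def scalar_prod_def atLeast0LessThan)
      ultimately show ?thesis by (simp add: pf mult.commute)
    qed
    have cf: "Polynomial.coeff f t0 = v $ t0"
      using t0 by (simp add: f_def coeff_sum coeff_monom sum.delta')
    then have f0: "f \<noteq> 0" using t0 by auto
    have deg: "Polynomial.degree f \<le> N - 1"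
    proof (rule degree_le, intro allI impI)
      fix i assume "N - 1 < i"
      then have "i \<notin> {..<N}" by auto
      then show "Polynomial.coeff f i = 0"
        by (simp add: f_def coeff_sum coeff_monom sum.delta)
    qed
    have "z ` {..<N} \<subseteq> {x. poly f x = 0}" using roots by auto
    then have "card (z ` {..<N}) \<le> card {x. poly f x = 0}"
      by (rule card_mono[OF poly_roots_finite[OF f0]])
    moreover have "card (z ` {..<N}) = N"
      by (subst card_image) (auto intro: inj_onI z_inj)
    moreover have "card {x. poly f x = 0} \<le> Polynomial.degree f" by (rule card_poly_roots_bound[OF f0])
    ultimately show False using deg N_pos by linarith
  qed
  from det_non_zero_imp_unit[OF Qc this, of "()"]
  show ?thesis by (auto simp: Units_def ring_mat_def)
qed

lemma bwd:
  assumes "\<exists>y::int. [int s = y ^ n] (mod int p)"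
  shows "realizable_over prime_subfield N (ind_rep p n g \<zeta>) (G_elems p n)"
proof -
  obtain y where "[int s = y ^ n] (mod int p)" using assms by blast
  then obtain m where m: "m < N" "[s = g ^ (n * m)] (mod p)" using bwd_start by blast
  define sg where "sg a = (a + m) mod N" for a
  define tu where "tu a = (a + (N - m)) mod N" for a
  have sgN: "sg a < N" for a using N_pos by (simp add: sg_def)
  have tuN: "tu a < N" for a using N_pos by (simp add: tu_def)
  have st: "sg (tu a) = a" if "a < N" for a
  proof -
    have "sg (tu a) = (a + (N - m) + m) mod N" by (simp add: sg_def tu_def mod_add_left_eq)
    also have "a + (N - m) + m = a + N" using m by simp
    finally show ?thesis using that by simp
  qed
  have ts: "tu (sg a) = a" if "a < N" for a
  proof -
    have "tu (sg a) = (a + m + (N - m)) mod N" by (simp add: sg_def tu_def mod_add_left_eq)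
    also have "a + m + (N - m) = a + N" using m by simp
    finally show ?thesis using that by simp
  qed
  have sginj: "a = b" if "a < N" "b < N" "sg a = sg b" for a b
    using ts[OF that(1)] ts[OF that(2)] that(3) by metis
  have Zs: "z a ^ s = z (sg a)" for a
  proof -
    have "[g ^ (n * a) * s = g ^ (n * a) * g ^ (n * m)] (mod p)"
      by (intro cong_mult cong_refl m(2))
    also have "g ^ (n * a) * g ^ (n * m) = g ^ (n * (a + m))"
      by (simp add: power_add distrib_left)
    also have "[g ^ (n * (a + m)) = g ^ (n * sg a)] (mod p)"
      unfolding sg_def by (rule gpow_mod)
    finally have "(g ^ (n * a) * s) mod p = g ^ (n * sg a) mod p" by (simp add: cong_def)
    then have "\<zeta> ^ (g ^ (n * a) * s) = \<zeta> ^ (g ^ (n * sg a))"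
      using zeta_eq_iff[OF z1 z2 p0] by blast
    then show ?thesis unfolding z_def by (simp add: power_mult)
  qed
  have ZQ: "(z a ^ t) ^ CARD('s) = z (sg a) ^ t" for a t
  proof -
    have "(z a ^ t) ^ CARD('s) = (z a ^ CARD('s)) ^ t"
      by (simp only: power_mult[symmetric] mult.commute)
    then show ?thesis using Zs[of a] sc by simp
  qed
  define Q :: "'s mod_ring alg_closure mat" where "Q = mat N N (\<lambda>(k, t). z k ^ t)"
  obtain P where P: "P \<in> carrier_mat N N" "P * Q = 1\<^sub>m N" "Q * P = 1\<^sub>m N"
    using Vdm_inv unfolding Q_def by blast
  have Qc: "Q \<in> carrier_mat N N" unfolding Q_def by simp
  define \<Phi> :: "'s mod_ring alg_closure mat \<Rightarrow> 's mod_ring alg_closure mat"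
    where "\<Phi> = map_mat (\<lambda>x. x ^ CARD('s))"
  define Pi :: "'s mod_ring alg_closure mat" where "Pi = PM N sg"
  define Pj :: "'s mod_ring alg_closure mat" where "Pj = PMI N sg"
  have Pic: "Pi \<in> carrier_mat N N" "Pj \<in> carrier_mat N N" unfolding Pi_def Pj_def by auto
  have PiPj: "Pi * Pj = 1\<^sub>m N" "Pj * Pi = 1\<^sub>m N"
    unfolding Pi_def Pj_def using perm_inv[of N sg tu, OF sgN tuN st ts] by auto
  have PhiQ: "\<Phi> Q = Pi * Q"
  proof -
    have "Pi * Q = mat N N (\<lambda>(a, b). Q $$ (sg a, b))"
      unfolding Pi_def by (rule perm_left[OF Qc sgN])
    also have "\<dots> = \<Phi> Q"
      by (rule eq_matI) (auto simp: Q_def \<Phi>_def sgN ZQ)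
    finally show ?thesis by simp
  qed
  have PhiR: "\<Phi> (ind_rep p n g \<zeta> (i, j)) = Pi * ind_rep p n g \<zeta> (i, j) * Pj" for i j
  proof -
    let ?R = "ind_rep p n g \<zeta> (i, j)"
    have Rc: "?R \<in> carrier_mat N N" by (rule R_carrier)
    have "Pi * ?R * Pj = mat N N (\<lambda>(a, b). ?R $$ (sg a, b)) * Pj"
      unfolding Pi_def by (subst perm_left[OF Rc sgN]) (rule refl)
    also have "\<dots> = mat N N (\<lambda>(a, b). mat N N (\<lambda>(a, b). ?R $$ (sg a, b)) $$ (a, sg b))"
      unfolding Pj_def by (rule perm_right) (auto simp: sgN)
    also have "\<dots> = \<Phi> ?R"
    proof (rule eq_matI)
      fix a b assume "a < dim_row (\<Phi> ?R)" "b < dim_col (\<Phi> ?R)"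
      then have ab: "a < N" "b < N" using Rc by (auto simp: \<Phi>_def)
      have eqv: "(sg a = (sg b + j) mod N) = (a = (b + j) mod N)"
      proof -
        have "(sg b + j) mod N = sg ((b + j) mod N)"
          unfolding sg_def by (simp add: mod_add_left_eq mod_add_right_eq ac_simps)
        moreover have "(b + j) mod N < N" using N_pos by simp
        ultimately show ?thesis using sginj[OF ab(1), of "(b + j) mod N"] by auto
      qed
      have "(z a ^ i) ^ CARD('s) = z (sg a) ^ i" by (rule ZQ)
      then show "mat N N (\<lambda>(a, b). mat N N (\<lambda>(a, b). ?R $$ (sg a, b)) $$ (a, sg b)) $$ (a, b) = \<Phi> ?R $$ (a, b)"
        using ab Rc sgN eqv by (simp add: \<Phi>_def R_eq ZQ)
    qed (use Rc in \<open>auto simp: \<Phi>_def\<close>)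
    finally show ?thesis by simp
  qed
  have PhiPQ: "\<Phi> P * \<Phi> Q = 1\<^sub>m N"
    using frob_mat_mult[OF P(1) Qc] P(2) frob_mat_one unfolding \<Phi>_def by metis
  have PhiPc: "\<Phi> P \<in> carrier_mat N N" using P(1) by (simp add: \<Phi>_def)
  have PhiPPi: "\<Phi> P * Pi = P"
  proof -
    have "\<Phi> P * Pi = \<Phi> P * Pi * (Q * P)" using PhiPc Pic by (simp add: P(3))
    also have "\<dots> = (\<Phi> P * (Pi * Q)) * P" using PhiPc Pic Qc P(1)
      by (simp add: assocN multN)
    also have "\<dots> = P" using PhiQ PhiPQ P(1) by simp
    finally show ?thesis .
  qed
  have PhiP: "\<Phi> P = P * Pj"
  proof -
    have "\<Phi> P = \<Phi> P * (Pi * Pj)" using PhiPc by (simp add: PiPj)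
    also have "\<dots> = P * Pj" using PhiPc Pic by (simp flip: assocN add: PhiPPi)
    finally show ?thesis .
  qed
  show ?thesis unfolding realizable_over_def
  proof (intro exI conjI ballI allI impI)
    show "P \<in> carrier_mat N N" "Q \<in> carrier_mat N N" "P * Q = 1\<^sub>m N" "Q * P = 1\<^sub>m N"
      using P Qc by auto
    fix x :: "nat \<times> nat" and a b assume ab: "a < N" "b < N"
    obtain i j where x: "x = (i, j)" by (cases x)
    let ?R = "ind_rep p n g \<zeta> (i, j)"
    have Rc: "?R \<in> carrier_mat N N" by (rule R_carrier)
    have "\<Phi> (P * ?R * Q) = \<Phi> P * \<Phi> ?R * \<Phi> Q"
      unfolding \<Phi>_def using P(1) Rc Qc by (simp add: frob_mat_mult[of _ N N _ N])
    also have "\<dots> = P * Pj * (Pi * ?R * Pj) * (Pi * Q)" by (simp add: PhiP PhiR PhiQ)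
    also have "\<dots> = P * (Pj * Pi) * ?R * (Pj * Pi) * Q"
      using P(1) Pic Rc Qc by (simp add: assocN multN)
    also have "\<dots> = P * ?R * Q" using P(1) Rc Qc by (simp add: PiPj)
    finally have "\<Phi> (P * ?R * Q) = P * ?R * Q" .
    then have "\<Phi> (P * ?R * Q) $$ (a, b) = (P * ?R * Q) $$ (a, b)" by simp
    then have "((P * ?R * Q) $$ (a, b)) ^ CARD('s) = (P * ?R * Q) $$ (a, b)"
      using ab P(1) Rc Qc by (simp add: \<Phi>_def)
    then show "(P * ind_rep p n g \<zeta> x * Q) $$ (a, b) \<in> prime_subfield"
      unfolding x by (rule frob_ps)
  qed
qed

end

theorem mainTheorem11:
  fixes p s n g :: nat
    and \<zeta> :: "('s::prime_card mod_ring) alg_closure"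
  assumes "Factorial_Ring.prime p" and "odd p"
    and "Factorial_Ring.prime s" and "odd s" and "s = CARD('s)"
    and "p \<noteq> s"
    and "n > 0" and "[p = 1] (mod n)"
    and "ord p g = p - 1"
    and "\<zeta> ^ p = 1" and "\<forall>k. 0 < k \<and> k < p \<longrightarrow> \<zeta> ^ k \<noteq> 1"
  shows "realizable_over prime_subfield ((p - 1) div n) (ind_rep p n g \<zeta>) (G_elems p n)
     \<longleftrightarrow> (\<exists>y::int. [int s = y ^ n] (mod int p))"
proof -
  interpret mainctx p s n g \<zeta>
    by unfold_locales (use assms in auto)
  show ?thesis using fwd bwd unfolding N_def by blast
qed

end
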